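(* Assume the standing assumptions below. Let $X_k\in\mathbb{R}^{n\times n}$ be symmetric with $X_k\succeq0$, and let $X_{k+1}$ be a symmetric matrix satisfying the Lyapunov equation $$\widehat A_k^{\mathsf T}X_{k+1}+X_{k+1}\widehat A_k+\widehat\Pi_k(X_k)+M_k=0,$$ where $R_k=R+\Pi_{22}(X_k)$, $S_k=X_kB+L+\Pi_{12}(X_k)$, $\widehat A_k=A-BR_k^{-1}S_k^{\mathsf T}$ $(=A_{\mathrm c}(X_k)-G_{\mathrm c}(X_k)X_k)$, $P_k=\begin{bmatrix}I_n\\-R_k^{-1}S_k^{\mathsf T}\end{bmatrix}$, $\widehat\Pi_k(X)=P_k^{\mathsf T}\Pi(X)P_k$, and $M_k=P_k^{\mathsf T}\begin{bmatrix}Q&L\\L^{\mathsf T}&R\end{bmatrix}P_k$. Then $A_{\mathrm c}(X_k)-G_{\mathrm c}(X_k)X_k$ is stable if and only if $X_{k+1}\succeq0$.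
   Context: Data: $A,Q\in\mathbb{R}^{n\times n}$, $B,L\in\mathbb{R}^{n\times m}$, $R\in\mathbb{R}^{m\times m}$, $A_0^i\in\mathbb{R}^{n\times n}$, $B_0^i\in\mathbb{R}^{n\times m}$ ($i=1,\dots,r$); $A_0^0=A$, $B_0^0=B$. For symmetric $X$: $\Pi(X)=\begin{bmatrix}\Pi_{11}(X)&\Pi_{12}(X)\\\Pi_{12}(X)^{\mathsf T}&\Pi_{22}(X)\end{bmatrix}$ with $\Pi_{11}(X)=\sum_{i=1}^r (A_0^i)^{\mathsf T}XA_0^i$, $\Pi_{12}(X)=\sum_i (A_0^i)^{\mathsf T}XB_0^i$, $\Pi_{22}(X)=\sum_i (B_0^i)^{\mathsf T}XB_0^i$; $L_{\mathrm c}=L+\Pi_{12}$, $R_{\mathrm c}=R+\Pi_{22}$; $A_{\mathrm c}(X)=A-BR_{\mathrm c}(X)^{-1}L_{\mathrm c}(X)^{\mathsf T}$, $G_{\mathrm c}(X)=BR_{\mathrm c}(X)^{-1}B^{\mathsf T}$. A matrix is stable if all eigenvalues lie in the open left half-plane. Standing assumptions: (1) $R\succ0$, $\begin{bmatrix}Q&L\\L^{\mathsf T}&R\end{bmatrix}\succeq0$; (2) there is $F\in\mathbb{R}^{m\times n}$ with $\dot S=(A+BF)S+S(A+BF)^{\mathsf T}+\sum_{i=1}^r(A_0^i+B_0^iF)S(A_0^i+B_0^iF)^{\mathsf T}$ exponentially stable; (3) with $C^{\mathsf T}C=Q-LR^{-1}L^{\mathsf T}$, $C\in\mathbb{R}^{p\times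 n}$, and $\widetilde A_0^i=A_0^i-B_0^iR^{-1}L^{\mathsf T}$, there is $K\in\mathbb{R}^{n\times p}$ with $\dot S=(\widetilde A_0^0+KC)S+S(\widetilde A_0^0+KC)^{\mathsf T}+\sum_{i=1}^r\widetilde A_0^iS(\widetilde A_0^i)^{\mathsf T}$ exponentially stable; (4) $\mathcal N(Q-LR^{-1}L^{\mathsf T})\subseteq\mathcal N(L^{\mathsf T})\cap\bigcap_i\mathcal N(A_0^i)$; (5) $(A,B)$ stabilizable and $(Q-LR^{-1}L^{\mathsf T},A)$ detectable. *)

theory Defs
  imports "HOL-Analysis.Analysis"
begin

definition sym_mat :: "real^'n^'n \<Rightarrow> bool" where
  "sym_mat X \<longleftrightarrow> transpose X = X"

definition psd :: "real^'n^'n \<Rightarrow> bool" where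
  "psd X \<longleftrightarrow> transpose X = X \<and> (\<forall>x. 0 \<le> x \<bullet> (X *v x))"

definition pd :: "real^'n^'n \<Rightarrow> bool" where
  "pd X \<longleftrightarrow> transpose X = X \<and> (\<forall>x. x \<noteq> 0 \<longrightarrow> 0 < x \<bullet> (X *v x))"

definition cmat :: "real^'n^'m \<Rightarrow> complex^'n^'m" where
  "cmat M = (\<chi> i j. complex_of_real (M $ i $ j))"

definition stable :: "real^'n^'n \<Rightarrow> bool" where
  "stable M \<longleftrightarrow> (\<forall>(l::complex) (v::complex^'n). v \<noteq> 0 \<and> cmat M *v v = l *s v \<longrightarrow> Re l < 0)"

definition exp_stable_ode :: "(real^'n^'n \<Rightarrow> real^'n^'n) \<Rightarrow> bool" where
  "exp_stable_ode Lop \<longleftrightarrow> (\<exists>c \<beta>. \<beta> > 0 \<and>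
     (\<forall>S::real \<Rightarrow> real^'n^'n.
        (\<forall>t\<ge>0. sym_mat (S t) \<and> (S has_vector_derivative Lop (S t)) (at t within {0..}))
        \<longrightarrow> (\<forall>t\<ge>0. norm (S t) \<le> c * exp (- \<beta> * t) * norm (S 0))))"

definition blockmat :: "real^'b^'a \<Rightarrow> real^'d^'a \<Rightarrow> real^'b^'c \<Rightarrow> real^'d^'c \<Rightarrow> real^('b+'d)^('a+'c)" where
  "blockmat M11 M12 M21 M22 = (\<chi> i j. case i of
      Inl i' \<Rightarrow> (case j of Inl j' \<Rightarrow> M11 $ i' $ j' | Inr j' \<Rightarrow> M12 $ i' $ j')
    | Inr i' \<Rightarrow> (case j of Inl j' \<Rightarrow> M21 $ i' $ j' | Inr j' \<Rightarrow> M22 $ i' $ j'))"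

definition vstack :: "real^'b^'a \<Rightarrow> real^'b^'c \<Rightarrow> real^'b^('a+'c)" where
  "vstack M1 M2 = (\<chi> i. case i of Inl i' \<Rightarrow> M1 $ i' | Inr i' \<Rightarrow> M2 $ i')"

definition Pi11 :: "nat \<Rightarrow> (nat \<Rightarrow> real^'n^'n) \<Rightarrow> real^'n^'n \<Rightarrow> real^'n^'n" where
  "Pi11 r A0 X = (\<Sum>i=1..r. transpose (A0 i) ** X ** A0 i)"

definition Pi12 :: "nat \<Rightarrow> (nat \<Rightarrow> real^'n^'n) \<Rightarrow> (nat \<Rightarrow> real^'m^'n) \<Rightarrow> real^'n^'n \<Rightarrow> real^'m^'n" where
  "Pi12 r A0 B0 X = (\<Sum>i=1..r. transpose (A0 i) ** X ** B0 i)"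

definition Pi22 :: "nat \<Rightarrow> (nat \<Rightarrow> real^'m^'n) \<Rightarrow> real^'n^'n \<Rightarrow> real^'m^'m" where
  "Pi22 r B0 X = (\<Sum>i=1..r. transpose (B0 i) ** X ** B0 i)"

definition PiM :: "nat \<Rightarrow> (nat \<Rightarrow> real^'n^'n) \<Rightarrow> (nat \<Rightarrow> real^'m^'n) \<Rightarrow> real^'n^'n \<Rightarrow> real^('n+'m)^('n+'m)" where
  "PiM r A0 B0 X = blockmat (Pi11 r A0 X) (Pi12 r A0 B0 X) (transpose (Pi12 r A0 B0 X)) (Pi22 r B0 X)"

definition Lc :: "real^'m^'n \<Rightarrow> nat \<Rightarrow> (nat \<Rightarrow> real^'n^'n) \<Rightarrow> (nat \<Rightarrow> real^'m^'n) \<Rightarrow> real^'n^'n \<Rightarrow> real^'m^'n" where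
  "Lc L r A0 B0 X = L + Pi12 r A0 B0 X"

definition Rc :: "real^'m^'m \<Rightarrow> nat \<Rightarrow> (nat \<Rightarrow> real^'m^'n) \<Rightarrow> real^'n^'n \<Rightarrow> real^'m^'m" where
  "Rc R r B0 X = R + Pi22 r B0 X"

definition Ac :: "real^'n^'n \<Rightarrow> real^'m^'n \<Rightarrow> real^'m^'n \<Rightarrow> real^'m^'m \<Rightarrow> nat \<Rightarrow> (nat \<Rightarrow> real^'n^'n) \<Rightarrow> (nat \<Rightarrow> real^'m^'n) \<Rightarrow> real^'n^'n \<Rightarrow> real^'n^'n" where
  "Ac A B L R r A0 B0 X = A - B ** matrix_inv (Rc R r B0 X) ** transpose (Lc L r A0 B0 X)"

definition Gc :: "real^'m^'n \<Rightarrow> real^'m^'m \<Rightarrow> nat \<Rightarrow> (nat \<Rightarrow> real^'m^'n) \<Rightarrow> real^'n^'n \<Rightarrow> real^'n^'n" where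
  "Gc B R r B0 X = B ** matrix_inv (Rc R r B0 X) ** transpose B"

end

theory Submission
  imports Defs "Jordan_Normal_Form.Spectral_Radius"
begin

hide_const (open) Matrix.mat Matrix.vec Matrix.row Matrix.col
no_notation Matrix.scalar_prod (infix "\<bullet>" 70)

definition vcat :: "real^'a \<Rightarrow> real^'c \<Rightarrow> real^('a+'c)" where
  "vcat x u = (\<chi> i. case i of Inl j \<Rightarrow> x $ j | Inr j \<Rightarrow> u $ j)"

lemma sum_UNIV_Plus: "(\<Sum>i\<in>(UNIV::('a::finite+'b::finite) set). g i) = (\<Sum>i\<in>UNIV. g (Inl i)) + (\<Sum>i\<in>UNIV. g (Inr i))"
  by (subst UNIV_Plus_UNIV[symmetric], subst sum.Plus) (simp_all add: comp_def)

lemma vstack_mulv: "vstack M1 M2 *v x = vcat (M1 *v x) (M2 *v x)"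
  by (auto simp: Finite_Cartesian_Product.vec_eq_iff vstack_def vcat_def matrix_vector_mult_def split: sum.splits)

lemma blockmat_mulv: "blockmat M11 M12 M21 M22 *v vcat x u = vcat (M11 *v x + M12 *v u) (M21 *v x + M22 *v u)"
  by (auto simp: Finite_Cartesian_Product.vec_eq_iff blockmat_def vcat_def matrix_vector_mult_def sum_UNIV_Plus split: sum.splits)

lemma inner_vcat: "vcat x u \<bullet> vcat y w = x \<bullet> y + u \<bullet> w"
  by (simp add: inner_vec_def vcat_def sum_UNIV_Plus)

lemma vcat_eq_0: "vcat x u = 0 \<longleftrightarrow> x = 0 \<and> u = 0"
  by (auto simp: Finite_Cartesian_Product.vec_eq_iff vcat_def split: sum.splits)

lemma dot_mulv_transpose: "x \<bullet> (transpose P *v y) = (P *v x) \<bullet> (y::real^_)"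
  by (metis dot_lmul_matrix inner_commute transpose_matrix_vector)

lemma quad_PMQ: "x \<bullet> ((transpose P ** M ** Q) *v y) = (P *v x) \<bullet> (M *v (Q *v (y::real^_)))"
  by (metis dot_mulv_transpose matrix_vector_mul_assoc)

lemma sym_dot: "transpose M = M \<Longrightarrow> x \<bullet> (M *v y) = y \<bullet> (M *v (x::real^_))"
  by (metis dot_mulv_transpose inner_commute)

lemma sum_mulv: "(\<Sum>i\<in>S. f i) *v x = (\<Sum>i\<in>S. f i *v (x::real^_))"
  by (induction S rule: infinite_finite_induct) (auto simp: matrix_vector_mult_add_rdistrib)

lemma transpose_add: "transpose (A + B) = transpose A + transpose (B::real^_^_)"
  unfolding transpose_def by (simp add: Finite_Cartesian_Product.vec_eq_iff)

lemma transpose_sum: "transpose (\<Sum>i\<in>S. f i) = (\<Sum>i\<in>S. transpose (f i :: real^_^_))"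
  unfolding transpose_def by (simp add: Finite_Cartesian_Product.vec_eq_iff sum_component)

lemma psd_zero:
  assumes "psd M" "x \<bullet> (M *v x) = 0"
  shows "M *v x = 0"
proof -
  have sym: "transpose M = M" and nn: "\<And>z. 0 \<le> z \<bullet> (M *v z)" using assms(1) by (auto simp: psd_def)
  define y where "y = M *v x"
  define d where "d = y \<bullet> (M *v y)"
  define c where "c = y \<bullet> y"
  have d0: "d \<ge> 0" using nn d_def by auto
  have key: "\<And>t. 0 \<le> 2 * t * c + t^2 * d"
  proof -
    fix t :: real
    have "(x + t *\<^sub>R y) \<bullet> (M *v (x + t *\<^sub>R y)) = x \<bullet> (M *v x) + t * (x \<bullet> (M *v y)) + t * (y \<bullet> (M *v x)) + t^2 * d"
      by (simp add: matrix_vector_right_distrib matrix_vector_mult_scaleR inner_add_left inner_add_right d_def power2_eq_square algebra_simps)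
    also have "x \<bullet> (M *v y) = y \<bullet> (M *v x)" using sym_dot[OF sym] by blast
    finally show "0 \<le> 2 * t * c + t^2 * d" using nn[of "x + t *\<^sub>R y"] assms(2) by (simp add: c_def y_def)
  qed
  have c0: "c \<ge> 0" by (simp add: c_def)
  have "c \<le> 0"
  proof -
    define t where "t = - c / (d + 1)"
    have td: "t * (d+1) = - c" using d0 by (simp add: t_def)
    have "(d+1)^2 * (2 * t * c + t^2 * d) = 2 * (t * (d+1)) * c * (d+1) + (t * (d+1))^2 * d"
      by (simp add: power2_eq_square algebra_simps)
    also have "\<dots> = - (c^2 * (d + 2))" unfolding td by (simp add: power2_eq_square algebra_simps)
    finally have e: "(d+1)^2 * (2 * t * c + t^2 * d) = - (c^2 * (d + 2))" .
    have "0 \<le> (d+1)^2 * (2 * t * c + t^2 * d)" using key[of t] by simp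
    hence "c^2 * (d + 2) \<le> 0" using e by linarith
    hence "c^2 \<le> 0" using d0 by (simp add: mult_le_0_iff)
    thus ?thesis by simp
  qed
  hence "c = 0" using c0 by simp
  thus ?thesis by (simp add: c_def y_def)
qed



definition cvec :: "real^'n \<Rightarrow> complex^'n" where "cvec x = (\<chi> j. complex_of_real (x $ j))"
definition re_v :: "complex^'n \<Rightarrow> real^'n" where "re_v v = (\<chi> j. Re (v $ j))"
definition im_v :: "complex^'n \<Rightarrow> real^'n" where "im_v v = (\<chi> j. Im (v $ j))"

lemma Re_cmat: "Re ((cmat M *v v) $ i) = (M *v re_v v) $ i"
  by (simp add: cmat_def re_v_def matrix_vector_mult_def Re_sum)

lemma Im_cmat: "Im ((cmat M *v v) $ i) = (M *v im_v v) $ i"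
  by (simp add: cmat_def im_v_def matrix_vector_mult_def Im_sum)

lemma cmat_eq_if:
  assumes "M *v re_v v = N *v re_v v" "M *v im_v v = N *v im_v v"
  shows "cmat M *v v = cmat N *v v"
  unfolding Finite_Cartesian_Product.vec_eq_iff
proof
  fix i
  show "(cmat M *v v) $ i = (cmat N *v v) $ i"
    by (rule complex_eqI) (simp_all only: Re_cmat Im_cmat assms)
qed

lemma re_v_cvec[simp]: "re_v (cvec x) = x" and im_v_cvec[simp]: "im_v (cvec x) = 0"
  by (simp_all add: re_v_def im_v_def cvec_def Finite_Cartesian_Product.vec_eq_iff)

lemma cmat_cvec: "cmat M *v cvec x = cvec (M *v x)"
  by (simp add: cmat_def cvec_def matrix_vector_mult_def Finite_Cartesian_Product.vec_eq_iff)

lemma cvec_eq_0: "cvec x = 0 \<longleftrightarrow> x = 0"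
  by (simp add: cvec_def Finite_Cartesian_Product.vec_eq_iff)

lemma cmat_mult: "cmat (M ** N) = cmat M ** cmat N"
  by (simp add: cmat_def matrix_matrix_mult_def Finite_Cartesian_Product.vec_eq_iff)

lemma cmat_add: "cmat (M + N) = cmat M + cmat N"
  by (simp add: cmat_def Finite_Cartesian_Product.vec_eq_iff)

lemma cmat_diff: "cmat (M - N) = cmat M - cmat N"
  by (simp add: cmat_def Finite_Cartesian_Product.vec_eq_iff)

lemma cmat_mat1: "cmat (mat 1) = mat 1"
  by (simp add: cmat_def Finite_Cartesian_Product.mat_def Finite_Cartesian_Product.vec_eq_iff)

lemma cmat_scaleR_mulv: "cmat (c *\<^sub>R M) *v v = complex_of_real c *s (cmat M *v v)"
  by (simp add: cmat_def matrix_vector_mult_def Finite_Cartesian_Product.vec_eq_iff sum_distrib_left algebra_simps)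

lemma re_im_eig:
  assumes "cmat M *v v = l *s v"
  shows "M *v re_v v = Re l *\<^sub>R re_v v - Im l *\<^sub>R im_v v"
    and "M *v im_v v = Im l *\<^sub>R re_v v + Re l *\<^sub>R im_v v"
proof -
  show "M *v re_v v = Re l *\<^sub>R re_v v - Im l *\<^sub>R im_v v"
    unfolding Finite_Cartesian_Product.vec_eq_iff
  proof
    fix i
    have "(M *v re_v v) $ i = Re ((cmat M *v v) $ i)" by (simp add: Re_cmat)
    also have "\<dots> = Re (l * v $ i)" using assms by simp
    finally show "(M *v re_v v) $ i = (Re l *\<^sub>R re_v v - Im l *\<^sub>R im_v v) $ i"
      by (simp add: re_v_def im_v_def)
  qed
  show "M *v im_v v = Im l *\<^sub>R re_v v + Re l *\<^sub>R im_v v"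
    unfolding Finite_Cartesian_Product.vec_eq_iff
  proof
    fix i
    have "(M *v im_v v) $ i = Im ((cmat M *v v) $ i)" by (simp add: Im_cmat)
    also have "\<dots> = Im (l * v $ i)" using assms by simp
    finally show "(M *v im_v v) $ i = (Im l *\<^sub>R re_v v + Re l *\<^sub>R im_v v) $ i"
      by (simp add: re_v_def im_v_def)
  qed
qed



definition idx :: "'n::finite \<Rightarrow> nat" where
  "idx = (SOME h. bij_betw h (UNIV::'n set) {0..<CARD('n)})"

lemma bij_idx: "bij_betw (idx::'n::finite \<Rightarrow> nat) UNIV {0..<CARD('n)}"
proof -
  have "\<exists>h. bij_betw h (UNIV::'n set) {0..<CARD('n)}"
    using ex_bij_betw_finite_nat[of "UNIV::'n set"] by simp
  thus ?thesis unfolding idx_def by (rule someI_ex)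
qed

definition idxi :: "nat \<Rightarrow> 'n::finite" where "idxi = inv_into UNIV idx"

lemma bij_idxi: "bij_betw (idxi::nat \<Rightarrow> 'n::finite) {0..<CARD('n)} UNIV"
  unfolding idxi_def by (rule bij_betw_inv_into[OF bij_idx])

lemma idx_lt[simp]: "idx (i::'n::finite) < CARD('n)"
  using bij_idx bij_betwE by fastforce

lemma idxi_idx[simp]: "idxi (idx (i::'n::finite)) = i"
  unfolding idxi_def by (meson bij_betw_imp_inj_on bij_idx inv_into_f_f iso_tuple_UNIV_I)

lemma idx_idxi[simp]: "k < CARD('n) \<Longrightarrow> idx (idxi k :: 'n::finite) = k"
  unfolding idxi_def by (metis atLeastLessThan_iff bij_betw_def bij_idx f_inv_into_f zero_le)

definition jmat :: "'a::comm_ring_1^'n::finite^'n \<Rightarrow> 'a Matrix.mat" where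
  "jmat C = Matrix.mat CARD('n) CARD('n) (\<lambda>(i,j). C $ idxi i $ idxi j)"

definition jvec :: "'a::comm_ring_1^'n::finite \<Rightarrow> 'a Matrix.vec" where
  "jvec v = Matrix.vec CARD('n) (\<lambda>i. v $ idxi i)"

definition unj :: "'a Matrix.vec \<Rightarrow> 'a^'n::finite" where
  "unj w = (\<chi> j. w $ idx j)"

lemma jmat_carrier[simp]: "jmat (C::'a::comm_ring_1^'n::finite^'n) \<in> carrier_mat CARD('n) CARD('n)"
  by (simp add: jmat_def)

lemma dim_jmat[simp]: "dim_row (jmat (C::'a::comm_ring_1^'n::finite^'n)) = CARD('n)"
  "dim_col (jmat (C::'a::comm_ring_1^'n::finite^'n)) = CARD('n)"
  by (simp_all add: jmat_def)

lemma dim_jvec[simp]: "dim_vec (jvec (v::'a::comm_ring_1^'n::finite)) = CARD('n)"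
  by (simp add: jvec_def)

lemma sum_idxi: "(\<Sum>k\<in>{0..<CARD('n)}. g (idxi k :: 'n::finite)) = (\<Sum>j\<in>UNIV. g j)"
  by (rule sum.reindex_bij_betw[OF bij_idxi])

lemma jmat_mulv: "jmat C *\<^sub>v jvec v = jvec (C *v (v::'a::comm_ring_1^'n::finite))"
proof (rule eq_vecI)
  fix i assume "i < dim_vec (jvec (C *v v))"
  hence i: "i < CARD('n)" by simp
  have "(jmat C *\<^sub>v jvec v) $ i = (\<Sum>k\<in>{0..<CARD('n)}. C $ idxi i $ idxi k * v $ idxi k)"
    using i by (simp add: Matrix.scalar_prod_def jmat_def jvec_def)
  also have "\<dots> = (C *v v) $ idxi i"
    by (subst sum_idxi[where g = "\<lambda>j. C $ idxi i $ j * v $ j"]) (simp add: matrix_vector_mult_def)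
  finally show "(jmat C *\<^sub>v jvec v) $ i = jvec (C *v v) $ i" using i by (simp add: jvec_def)
qed simp

lemma jmat_mult: "jmat (C ** D) = jmat C * jmat (D::'a::comm_ring_1^'n::finite^'n)"
proof (rule eq_matI)
  fix i j assume "i < dim_row (jmat C * jmat D)" "j < dim_col (jmat C * jmat D)"
  hence ij: "i < CARD('n)" "j < CARD('n)" by auto
  have "(jmat C * jmat D) $$ (i,j) = (\<Sum>k\<in>{0..<CARD('n)}. C $ idxi i $ idxi k * D $ idxi k $ idxi j)"
    using ij by (simp add: Matrix.scalar_prod_def jmat_def)
  also have "\<dots> = (C ** D) $ idxi i $ idxi j"
    by (subst sum_idxi[where g = "\<lambda>k. C $ idxi i $ k * D $ k $ idxi j"]) (simp add: matrix_matrix_mult_def)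
  finally show "jmat (C ** D) $$ (i,j) = (jmat C * jmat D) $$ (i,j)" using ij by (simp add: jmat_def)
qed auto

lemma idxi_inj: "i < CARD('n) \<Longrightarrow> j < CARD('n) \<Longrightarrow> (idxi i :: 'n::finite) = idxi j \<longleftrightarrow> i = j"
  by (metis idx_idxi)

lemma jmat_one: "jmat (mat 1 :: 'a::comm_ring_1^'n::finite^'n) = 1\<^sub>m CARD('n)"
  by (rule eq_matI) (auto simp: jmat_def Finite_Cartesian_Product.mat_def idxi_inj)

fun mpow :: "'a::comm_ring_1^'n^'n \<Rightarrow> nat \<Rightarrow> 'a^'n^'n" where
  "mpow M 0 = mat 1"
| "mpow M (Suc k) = mpow M k ** M"

lemma jmat_pow: "jmat (mpow (C::'a::comm_ring_1^'n::finite^'n) k) = jmat C ^\<^sub>m k"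
  by (induction k) (auto simp: jmat_one jmat_mult)

lemma jvec_inj: "jvec v = jvec w \<Longrightarrow> v = (w::'a::comm_ring_1^'n::finite)"
proof -
  assume a: "jvec v = jvec w"
  show "v = w" unfolding Finite_Cartesian_Product.vec_eq_iff
  proof
    fix j :: 'n
    have "jvec v $ idx j = jvec w $ idx j" using a by simp
    thus "v $ j = w $ j" by (simp add: jvec_def)
  qed
qed

lemma jvec_unj: "w \<in> carrier_vec CARD('n) \<Longrightarrow> jvec (unj w :: 'a::comm_ring_1^'n::finite) = w"
  by (rule eq_vecI) (auto simp: jvec_def unj_def)

lemma jvec_smult: "jvec (c *s v) = c \<cdot>\<^sub>v jvec (v::'a::comm_ring_1^'n::finite)"
  by (rule eq_vecI) (auto simp: jvec_def)

lemma jvec_zero: "jvec (0::'a::comm_ring_1^'n::finite) = 0\<^sub>v CARD('n)"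
  by (rule eq_vecI) (auto simp: jvec_def)

lemma jeig_to:
  assumes "eigenvector (jmat (C::'a::comm_ring_1^'n::finite^'n)) w l"
  shows "\<exists>v. v \<noteq> 0 \<and> C *v v = l *s v"
proof -
  have w: "w \<in> carrier_vec CARD('n)" "w \<noteq> 0\<^sub>v CARD('n)" "jmat C *\<^sub>v w = l \<cdot>\<^sub>v w"
    using assms by (auto simp: eigenvector_def)
  define v where "v = (unj w :: 'a^'n)"
  have jv: "jvec v = w" using jvec_unj[OF w(1)] v_def by simp
  have "jvec (C *v v) = jvec (l *s v)" by (metis jmat_mulv jv jvec_smult w(3))
  hence "C *v v = l *s v" by (rule jvec_inj)
  moreover have "v \<noteq> 0" using jv w(2) jvec_zero by metis
  ultimately show ?thesis by blast
qed

lemma jeig_from: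
  assumes "v \<noteq> 0" "C *v v = l *s v"
  shows "eigenvector (jmat (C::'a::comm_ring_1^'n::finite^'n)) (jvec v) l"
proof -
  have "jvec v \<noteq> 0\<^sub>v CARD('n)" using assms(1) jvec_inj jvec_zero by metis
  moreover have "jmat C *\<^sub>v jvec v = l \<cdot>\<^sub>v jvec v" unfolding jmat_mulv assms(2) jvec_smult ..
  moreover have "jvec v \<in> carrier_vec CARD('n)" unfolding carrier_dim_vec by (rule dim_jvec)
  ultimately show ?thesis unfolding eigenvector_def dim_jmat by blast
qed



lemma cmat_mpow: "cmat (mpow M k) = mpow (cmat M) k"
  by (induction k) (auto simp: cmat_mult cmat_mat1)

lemma scaleR_mult_mat: "(a *\<^sub>R A) ** (b *\<^sub>R B) = (a * b) *\<^sub>R (A ** (B::real^'n^'n))"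
  by (simp add: Finite_Cartesian_Product.vec_eq_iff matrix_matrix_mult_def sum_distrib_left algebra_simps)

lemma mpow_scaleR: "mpow (c *\<^sub>R M) k = c^k *\<^sub>R mpow (M::real^'n^'n) k"
proof (induction k)
  case 0 show ?case by simp
next
  case (Suc k)
  have "mpow (c *\<^sub>R M) (Suc k) = (c^k *\<^sub>R mpow M k) ** (c *\<^sub>R M)" using Suc by simp
  also have "\<dots> = c^Suc k *\<^sub>R mpow M (Suc k)" by (simp add: scaleR_mult_mat mult.commute)
  finally show ?case .
qed

lemma jmat_idx: "jmat C $$ (idx i, idx j) = (C::'a::comm_ring_1^'n::finite^'n) $ i $ j"
  by (simp add: jmat_def)

lemma pow_decay:
  fixes M :: "real^'n^'n"
  assumes eig: "\<And>l v. v \<noteq> 0 \<Longrightarrow> cmat M *v v = l *s v \<Longrightarrow> cmod l < 1"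
  shows "((\<lambda>k. mpow M k *v x) \<longlongrightarrow> 0) sequentially"
proof -
  define J where "J = jmat (cmat M)"
  have Jc: "J \<in> carrier_mat CARD('n) CARD('n)" by (simp add: J_def)
  have n0: "CARD('n) > 0" by simp
  define \<rho> where "\<rho> = spectral_radius J"
  have "\<rho> \<in> norm ` spectrum J" using spectral_radius_mem_max(1)[OF Jc n0] \<rho>_def by simp
  then obtain \<mu> where mu: "eigenvalue J \<mu>" "\<rho> = cmod \<mu>" by (auto simp: spectrum_def)
  then obtain w where "eigenvector J w \<mu>" by (auto simp: eigenvalue_def)
  then obtain v where "v \<noteq> 0" "cmat M *v v = \<mu> *s v" using jeig_to J_def by blast
  hence rho1: "\<rho> < 1" using eig mu by simp
  have rho0: "\<rho> \<ge> 0" using mu by simp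
  define c where "c = 2 / (1 + \<rho>)"
  have c1: "c > 1" using rho1 rho0 by (simp add: c_def field_simps)
  have crho: "c * \<rho> < 1" using rho1 rho0 by (simp add: c_def field_simps)
  define J' where "J' = jmat (cmat (c *\<^sub>R M))"
  have J'c: "J' \<in> carrier_mat CARD('n) CARD('n)" by (simp add: J'_def)
  have "spectral_radius J' \<in> norm ` spectrum J'" using spectral_radius_mem_max(1)[OF J'c n0] by simp
  then obtain \<nu> where nu: "eigenvalue J' \<nu>" "spectral_radius J' = cmod \<nu>" by (auto simp: spectrum_def)
  then obtain w' where "eigenvector J' w' \<nu>" by (auto simp: eigenvalue_def)
  then obtain v' where v': "v' \<noteq> 0" "cmat (c *\<^sub>R M) *v v' = \<nu> *s v'" using jeig_to J'_def by blast
  have "cmat M *v v' = (\<nu> / complex_of_real c) *s v'"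
  proof -
    have "complex_of_real c *s (cmat M *v v') = \<nu> *s v'" using v' cmat_scaleR_mulv by metis
    hence "(1 / complex_of_real c) *s (complex_of_real c *s (cmat M *v v')) = (1 / complex_of_real c) *s (\<nu> *s v')" by simp
    thus ?thesis using c1 by (simp add: vector_smult_assoc)
  qed
  hence "eigenvector J (jvec v') (\<nu> / complex_of_real c)" using jeig_from v'(1) J_def by blast
  hence "eigenvalue J (\<nu> / complex_of_real c)" by (auto simp: eigenvalue_def)
  hence "cmod (\<nu> / complex_of_real c) \<in> norm ` spectrum J" by (auto simp: spectrum_def)
  hence "cmod (\<nu> / complex_of_real c) \<le> \<rho>" using spectral_radius_mem_max(2)[OF Jc n0] \<rho>_def by simp
  hence "cmod \<nu> \<le> c * \<rho>" using c1 by (simp add: norm_divide field_simps)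
  hence "spectral_radius J' < 1" using nu crho by simp
  from spectral_radius_jnf_norm_bound_less_1_upper_triangular[OF J'c this]
  obtain b where b: "\<And>k. norm_bound (J' ^\<^sub>m k) b" by auto
  have ent: "\<bar>mpow M k $ i $ j\<bar> \<le> b * (1/c)^k" for k i j
  proof -
    have "J' ^\<^sub>m k = jmat (cmat (c^k *\<^sub>R mpow M k))"
      by (simp add: J'_def jmat_pow[symmetric] cmat_mpow[symmetric] mpow_scaleR)
    hence "norm (jmat (cmat (c^k *\<^sub>R mpow M k)) $$ (idx i, idx j)) \<le> b"
      using b[of k] by (simp add: norm_bound_def)
    hence "cmod (complex_of_real (c^k * mpow M k $ i $ j)) \<le> b" by (simp add: jmat_idx cmat_def)
    hence "\<bar>c^k * mpow M k $ i $ j\<bar> \<le> b" by (simp only: norm_of_real)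
    hence "c^k * \<bar>mpow M k $ i $ j\<bar> \<le> b" using c1 by (simp add: abs_mult)
    thus ?thesis using c1 by (simp add: field_simps power_divide)
  qed
  have lim: "((\<lambda>k. b * (1/c)^k) \<longlongrightarrow> 0) sequentially"
    using c1 by (intro tendsto_mult_right_zero LIMSEQ_power_zero) simp
  show ?thesis
  proof (rule vec_tendstoI)
    fix i
    have "((\<lambda>k. \<Sum>j\<in>UNIV. mpow M k $ i $ j * x $ j) \<longlongrightarrow> 0) sequentially"
    proof (rule tendsto_null_sum)
      fix j :: 'n
      show "((\<lambda>k. mpow M k $ i $ j * x $ j) \<longlongrightarrow> 0) sequentially"
      proof (rule Lim_null_comparison)
        show "\<forall>\<^sub>F k in sequentially. norm (mpow M k $ i $ j * x $ j) \<le> b * (1/c)^k * \<bar>x $ j\<bar>"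
          using ent by (intro always_eventually allI) (simp add: abs_mult mult_right_mono)
        show "((\<lambda>k. b * (1/c)^k * \<bar>x $ j\<bar>) \<longlongrightarrow> 0) sequentially"
          using lim by (rule tendsto_mult_left_zero)
      qed
    qed
    thus "((\<lambda>k. (mpow M k *v x) $ i) \<longlongrightarrow> (0::real^'n) $ i) sequentially"
      by (simp add: matrix_vector_mult_def)
  qed
qed



lemma lyap_quad:
  assumes "transpose X = X"
  shows "y \<bullet> ((transpose N ** X + X ** N) *v y) = 2 * ((N *v y) \<bullet> (X *v (y::real^'n)))"
proof -
  have "y \<bullet> ((transpose N ** X + X ** N) *v y) = y \<bullet> (transpose N *v (X *v y)) + y \<bullet> (X *v (N *v y))"
    by (simp add: matrix_vector_mult_add_rdistrib inner_add_right matrix_vector_mul_assoc)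
  also have "y \<bullet> (transpose N *v (X *v y)) = (N *v y) \<bullet> (X *v y)" by (rule dot_mulv_transpose)
  also have "y \<bullet> (X *v (N *v y)) = (N *v y) \<bullet> (X *v y)" by (rule sym_dot[OF assms])
  finally show ?thesis by simp
qed

lemma invertible_from_ker:
  assumes "\<And>x. A *v x = 0 \<Longrightarrow> x = 0"
  shows "invertible (A::real^'n^'n)"
  using assms matrix_left_invertible_ker invertible_left_inverse by metis

lemma matrix_inv_props:
  assumes "invertible (A::real^'n^'n)"
  shows "A ** matrix_inv A = mat 1" "matrix_inv A ** A = mat 1"
proof -
  have "\<exists>A'. A ** A' = mat 1 \<and> A' ** A = mat 1" using assms by (simp add: invertible_def)
  hence "A ** matrix_inv A = mat 1 \<and> matrix_inv A ** A = mat 1"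
    unfolding matrix_inv_def by (rule someI_ex)
  thus "A ** matrix_inv A = mat 1" "matrix_inv A ** A = mat 1" by auto
qed

lemma cayley_mod:
  assumes "Re ((l - 1) / (l + 1)) < 0"
  shows "cmod l < 1"
proof -
  have d: "(Re l + 1)^2 + (Im l)^2 \<ge> 0" by simp
  have "(Re (l-1) * Re (l+1) + Im (l-1) * Im (l+1)) / ((Re (l+1))^2 + (Im (l+1))^2) < 0"
    using assms by (simp only: Re_divide)
  hence "Re (l-1) * Re (l+1) + Im (l-1) * Im (l+1) < 0"
    using d by (auto simp add: divide_less_0_iff add_nonneg_nonneg)
  hence "(Re l)^2 + (Im l)^2 < 1" by (simp add: power2_eq_square algebra_simps)
  hence "(cmod l)^2 < 1" by (simp add: cmod_power2)
  thus ?thesis by (simp add: power_less_one_iff abs_square_less_1)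
qed

lemma lyap_psd:
  fixes N X :: "real^'n^'n"
  assumes st: "stable N" and sym: "transpose X = X"
    and neg: "\<And>y. y \<bullet> ((transpose N ** X + X ** N) *v y) \<le> 0"
  shows "0 \<le> x \<bullet> (X *v x)"
proof -
  have ker: "y = 0" if "(mat 1 - N) *v y = 0" for y
  proof (rule ccontr)
    assume y0: "y \<noteq> 0"
    have "N *v y = y" using that by (simp add: matrix_vector_mult_diff_rdistrib)
    hence "cmat N *v cvec y = 1 *s cvec y" by (simp add: cmat_cvec)
    moreover have "cvec y \<noteq> 0" using y0 cvec_eq_0 by blast
    ultimately have "Re 1 < 0" using st unfolding stable_def by blast
    thus False by simp
  qed
  have inv: "invertible (mat 1 - N)" using ker invertible_from_ker by blast
  define Ni where "Ni = matrix_inv (mat 1 - N)"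
  have Ni1: "(mat 1 - N) ** Ni = mat 1" using matrix_inv_props(1)[OF inv] Ni_def by simp
  define T where "T = (mat 1 + N) ** Ni"
  have stein: "(T *v z) \<bullet> (X *v (T *v z)) \<le> z \<bullet> (X *v z)" for z
  proof -
    define y where "y = Ni *v z"
    define u where "u = N *v y"
    have z: "z = y - u"
    proof -
      have "z = ((mat 1 - N) ** Ni) *v z" using Ni1 by simp
      also have "\<dots> = y - u" by (simp add: y_def u_def matrix_vector_mul_assoc[symmetric] matrix_vector_mult_diff_rdistrib)
      finally show ?thesis .
    qed
    have Tz: "T *v z = y + u"
      by (simp add: T_def y_def u_def matrix_vector_mul_assoc[symmetric] matrix_vector_mult_add_rdistrib)
    have s1: "y \<bullet> (X *v u) = u \<bullet> (X *v y)" by (rule sym_dot[OF sym])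
    have e: "(y + u) \<bullet> (X *v (y + u)) - (y - u) \<bullet> (X *v (y - u)) = 2 * (y \<bullet> (X *v u) + u \<bullet> (X *v y))"
      by (simp add: matrix_vector_right_distrib matrix_vector_mult_diff_distrib inner_add_left inner_add_right
          inner_diff_left inner_diff_right algebra_simps)
    have "y \<bullet> ((transpose N ** X + X ** N) *v y) = 2 * (u \<bullet> (X *v y))"
      using lyap_quad[OF sym] u_def by simp
    hence "u \<bullet> (X *v y) \<le> 0" using neg[of y] by simp
    thus ?thesis using e s1 z Tz by simp
  qed
  have eigT: "cmod l < 1" if w0: "w \<noteq> 0" and ew: "cmat T *v w = l *s w" for l w
  proof -
    define y where "y = cmat Ni *v w"
    define u where "u = cmat N *v y"
    have w: "w = y - u"
    proof -
      have "w = cmat ((mat 1 - N) ** Ni) *v w" using Ni1 by (simp add: cmat_mat1)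
      also have "\<dots> = y - u"
        by (simp add: y_def u_def cmat_mult cmat_diff cmat_mat1 matrix_vector_mul_assoc[symmetric] matrix_vector_mult_diff_rdistrib)
      finally show ?thesis .
    qed
    have Tw: "cmat T *v w = y + u"
      by (simp add: T_def y_def u_def cmat_mult cmat_add cmat_mat1 matrix_vector_mul_assoc[symmetric] matrix_vector_mult_add_rdistrib)
    have eq: "y + u = l *s (y - u)" using ew Tw w by simp
    have y0: "y \<noteq> 0"
    proof
      assume "y = 0"
      hence "w = 0" using w u_def by simp
      thus False using w0 by simp
    qed
    have l1: "l + 1 \<noteq> 0"
    proof
      assume "l + 1 = 0"
      hence l: "l = -1" by (simp add: add_eq_0_iff2)
      have "y = 0" unfolding Finite_Cartesian_Product.vec_eq_iff
      proof
        fix i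
        have "y $ i + u $ i = - (y $ i - u $ i)" using arg_cong[OF eq, of "\<lambda>v. v $ i"] l by simp
        thus "y $ i = 0 $ i" by simp
      qed
      thus False using y0 by simp
    qed
    have "cmat N *v y = ((l - 1) / (l + 1)) *s y" unfolding u_def[symmetric] Finite_Cartesian_Product.vec_eq_iff
    proof
      fix i
      have "y $ i + u $ i = l * (y $ i - u $ i)" using arg_cong[OF eq, of "\<lambda>v. v $ i"] by (simp add: right_diff_distrib)
      hence "u $ i * (l + 1) = (l - 1) * y $ i" by (simp add: algebra_simps)
      thus "u $ i = (((l - 1) / (l + 1)) *s y) $ i" using l1 by (simp add: field_simps)
    qed
    hence "Re ((l - 1) / (l + 1)) < 0" using st y0 unfolding stable_def by blast
    thus ?thesis by (rule cayley_mod)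
  qed
  have mono: "(mpow T k *v x) \<bullet> (X *v (mpow T k *v x)) \<le> x \<bullet> (X *v x)" for k x
  proof (induction k arbitrary: x)
    case 0 show ?case by simp
  next
    case (Suc k)
    have "mpow T (Suc k) *v x = mpow T k *v (T *v x)" by (simp add: matrix_vector_mul_assoc)
    hence "(mpow T (Suc k) *v x) \<bullet> (X *v (mpow T (Suc k) *v x)) \<le> (T *v x) \<bullet> (X *v (T *v x))"
      using Suc.IH[of "T *v x"] by simp
    also have "\<dots> \<le> x \<bullet> (X *v x)" by (rule stein)
    finally show ?case .
  qed
  have lim: "((\<lambda>k. mpow T k *v x) \<longlongrightarrow> 0) sequentially"
    using pow_decay eigT by blast
  have limX: "((\<lambda>k. X *v (mpow T k *v x)) \<longlongrightarrow> X *v 0) sequentially"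
    using bounded_linear.tendsto[OF matrix_vector_mul_bounded_linear lim] by simp
  have "((\<lambda>k. (mpow T k *v x) \<bullet> (X *v (mpow T k *v x))) \<longlongrightarrow> 0 \<bullet> (X *v 0)) sequentially"
    by (rule tendsto_inner[OF lim limX])
  hence "((\<lambda>k. (mpow T k *v x) \<bullet> (X *v (mpow T k *v x))) \<longlongrightarrow> 0) sequentially" by simp
  thus ?thesis using mono by (intro LIMSEQ_le_const2) auto
qed



definition vfst :: "real^('a::finite+'c::finite) \<Rightarrow> real^'a" where "vfst z = (\<chi> i. z $ Inl i)"
definition vsnd :: "real^('a::finite+'c::finite) \<Rightarrow> real^'c" where "vsnd z = (\<chi> i. z $ Inr i)"

lemma vcat_split: "vcat (vfst z) (vsnd z) = z"
  by (simp add: Finite_Cartesian_Product.vec_eq_iff vcat_def vfst_def vsnd_def split: sum.splits)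

lemma neg_mulv: "(- K) *v y = - (K *v (y::real^_))"
  by (simp add: Finite_Cartesian_Product.vec_eq_iff matrix_vector_mult_def sum_negf)

lemma mulv_uminus: "A *v (- x) = - (A *v (x::real^_))"
  by (simp add: Finite_Cartesian_Product.vec_eq_iff matrix_vector_mult_def sum_negf)

lemma transpose_PMQ: "transpose (transpose P ** X ** Q) = transpose Q ** transpose X ** (P::real^_^_)"
  by (simp add: matrix_transpose_mul matrix_mul_assoc)

lemma Pi_psd:
  assumes "psd Xk"
  shows "0 \<le> z \<bullet> (PiM r A0 B0 Xk *v z)"
proof -
  have sym: "transpose Xk = Xk" using assms by (simp add: psd_def)
  define x where "x = vfst z"
  define u where "u = vsnd z"
  have z: "z = vcat x u" using vcat_split x_def u_def by metis
  let ?p = "\<lambda>i. A0 i *v x" and ?s = "\<lambda>i. B0 i *v u"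
  have "z \<bullet> (PiM r A0 B0 Xk *v z) = x \<bullet> (Pi11 r A0 Xk *v x) + x \<bullet> (Pi12 r A0 B0 Xk *v u)
        + u \<bullet> (transpose (Pi12 r A0 B0 Xk) *v x) + u \<bullet> (Pi22 r B0 Xk *v u)"
    unfolding z PiM_def blockmat_mulv inner_vcat by (simp add: inner_add_right)
  also have "\<dots> = (\<Sum>i=1..r. x \<bullet> ((transpose (A0 i) ** Xk ** A0 i) *v x)) + (\<Sum>i=1..r. x \<bullet> ((transpose (A0 i) ** Xk ** B0 i) *v u))
        + (\<Sum>i=1..r. u \<bullet> ((transpose (B0 i) ** Xk ** A0 i) *v x)) + (\<Sum>i=1..r. u \<bullet> ((transpose (B0 i) ** Xk ** B0 i) *v u))"
    unfolding Pi11_def Pi12_def Pi22_def transpose_sum sum_mulv inner_sum_right transpose_PMQ sym ..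
  also have "\<dots> = (\<Sum>i=1..r. x \<bullet> ((transpose (A0 i) ** Xk ** A0 i) *v x) + x \<bullet> ((transpose (A0 i) ** Xk ** B0 i) *v u)
        + u \<bullet> ((transpose (B0 i) ** Xk ** A0 i) *v x) + u \<bullet> ((transpose (B0 i) ** Xk ** B0 i) *v u))"
    by (simp only: sum.distrib)
  also have "\<dots> = (\<Sum>i=1..r. (?p i + ?s i) \<bullet> (Xk *v (?p i + ?s i)))"
  proof (rule sum.cong[OF refl])
    fix i
    show "x \<bullet> ((transpose (A0 i) ** Xk ** A0 i) *v x) + x \<bullet> ((transpose (A0 i) ** Xk ** B0 i) *v u)
        + u \<bullet> ((transpose (B0 i) ** Xk ** A0 i) *v x) + u \<bullet> ((transpose (B0 i) ** Xk ** B0 i) *v u)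
        = (?p i + ?s i) \<bullet> (Xk *v (?p i + ?s i))"
      unfolding quad_PMQ matrix_vector_right_distrib inner_add_left inner_add_right by (simp only: add.assoc)
  qed
  also have "\<dots> \<ge> 0" using assms by (intro sum_nonneg) (simp add: psd_def)
  finally show ?thesis .
qed

lemma pd_ker: "pd R \<Longrightarrow> R *v u = 0 \<Longrightarrow> u = 0"
  unfolding pd_def by (metis inner_zero_right less_irrefl)



theorem lemmaC2:
  fixes A Q :: "real^'n^'n" and B L :: "real^'m^'n" and R :: "real^'m^'m"
    and r :: nat and A0 :: "nat \<Rightarrow> real^'n^'n" and B0 :: "nat \<Rightarrow> real^'m^'n"
    and C :: "real^'n^'p"
    and Xk Xk1 :: "real^'n^'n"
  assumes A1_R: "pd R"
    and A1_blk: "psd (blockmat Q L (transpose L) R)"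
    and A2: "\<exists>F::real^'n^'m. exp_stable_ode (\<lambda>S.
              (A + B ** F) ** S + S ** transpose (A + B ** F)
              + (\<Sum>i=1..r. (A0 i + B0 i ** F) ** S ** transpose (A0 i + B0 i ** F)))"
    and A3_C: "transpose C ** C = Q - L ** matrix_inv R ** transpose L"
    and A3: "\<exists>K::real^'p^'n. exp_stable_ode (\<lambda>S.
              ((A - B ** matrix_inv R ** transpose L) + K ** C) ** S
              + S ** transpose ((A - B ** matrix_inv R ** transpose L) + K ** C)
              + (\<Sum>i=1..r. (A0 i - B0 i ** matrix_inv R ** transpose L) ** S
                           ** transpose (A0 i - B0 i ** matrix_inv R ** transpose L)))"
    and A4: "\<forall>x. (Q - L ** matrix_inv R ** transpose L) *v x = 0 \<longrightarrow>
               (transpose L *v x = 0 \<and> (\<forall>i\<in>{1..r}. A0 i *v x = 0))"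
    and A5_stab: "\<exists>F::real^'n^'m. stable (A + B ** F)"
    and A5_det: "\<exists>K::real^'n^'n. stable (A + K ** (Q - L ** matrix_inv R ** transpose L))"
    and Xk_psd: "psd Xk"
    and Xk1_sym: "transpose Xk1 = Xk1"
    and lyap: "let Rk = R + Pi22 r B0 Xk;
                   Sk = Xk ** B + L + Pi12 r A0 B0 Xk;
                   Ahat = A - B ** matrix_inv Rk ** transpose Sk;
                   Pk = vstack (mat 1 :: real^'n^'n) (- (matrix_inv Rk ** transpose Sk));
                   PiHat = transpose Pk ** PiM r A0 B0 Xk ** Pk;
                   Mk = transpose Pk ** blockmat Q L (transpose L) R ** Pk
               in transpose Ahat ** Xk1 + Xk1 ** Ahat + PiHat + Mk = 0"
  shows "stable (Ac A B L R r A0 B0 Xk - Gc B R r B0 Xk ** Xk) \<longleftrightarrow> psd Xk1"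
proof -
  define Rk where "Rk = R + Pi22 r B0 Xk"
  define Sk where "Sk = Xk ** B + L + Pi12 r A0 B0 Xk"
  define K where "K = matrix_inv Rk ** transpose Sk"
  define Ahat where "Ahat = A - B ** matrix_inv Rk ** transpose Sk"
  define Pk where "Pk = vstack (mat 1 :: real^'n^'n) (- (matrix_inv Rk ** transpose Sk))"
  define PiHat where "PiHat = transpose Pk ** PiM r A0 B0 Xk ** Pk"
  define Mb where "Mb = blockmat Q L (transpose L) R"
  define Mk where "Mk = transpose Pk ** Mb ** Pk"
  have lyap': "transpose Ahat ** Xk1 + Xk1 ** Ahat + PiHat + Mk = 0"
    using lyap unfolding Let_def Rk_def[symmetric] Sk_def[symmetric] Ahat_def[symmetric] Pk_def[symmetric]
      PiHat_def[symmetric] Mb_def[symmetric] Mk_def[symmetric] .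
  have Xsym: "transpose Xk = Xk" using Xk_psd by (simp add: psd_def)
  have AhatEq: "Ac A B L R r A0 B0 Xk - Gc B R r B0 Xk ** Xk = Ahat"
  proof -
    have tS: "transpose Sk = transpose B ** Xk + transpose (Lc L r A0 B0 Xk)"
      by (simp add: Sk_def Lc_def transpose_add matrix_transpose_mul Xsym)
    show ?thesis
      by (simp add: Ac_def Gc_def Ahat_def tS Rc_def Rk_def[symmetric] matrix_add_ldistrib matrix_mul_assoc algebra_simps)
  qed
  have Pky: "Pk *v y = vcat y (- (K *v y))" for y
    by (simp add: Pk_def vstack_mulv neg_mulv K_def)
  have Fnn: "0 \<le> y \<bullet> (PiHat *v y)" for y
    unfolding PiHat_def quad_PMQ by (rule Pi_psd[OF Xk_psd])
  have Gnn: "0 \<le> y \<bullet> (Mk *v y)" for y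
    unfolding Mk_def quad_PMQ using A1_blk unfolding psd_def Mb_def by blast
  have quad: "y \<bullet> ((transpose Ahat ** Xk1 + Xk1 ** Ahat) *v y) = - (y \<bullet> (PiHat *v y) + y \<bullet> (Mk *v y))" for y
  proof -
    have "(transpose Ahat ** Xk1 + Xk1 ** Ahat) + (PiHat + Mk) = 0" using lyap'
      by (simp only: add.assoc)
    hence H: "transpose Ahat ** Xk1 + Xk1 ** Ahat = - (PiHat + Mk)"
      by (simp only: eq_neg_iff_add_eq_0)
    show ?thesis unfolding H neg_mulv inner_minus_right matrix_vector_mult_add_rdistrib inner_add_right ..
  qed
  show ?thesis unfolding AhatEq
  proof
    assume st: "stable Ahat"
    show "psd Xk1" unfolding psd_def
    proof (intro conjI allI)
      show "transpose Xk1 = Xk1" by (rule Xk1_sym)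
      fix x
      show "0 \<le> x \<bullet> (Xk1 *v x)"
      proof (rule lyap_psd[OF st Xk1_sym])
        fix y
        show "y \<bullet> ((transpose Ahat ** Xk1 + Xk1 ** Ahat) *v y) \<le> 0"
          using quad[of y] Fnn[of y] Gnn[of y] by simp
      qed
    qed
  next
    assume psdX: "psd Xk1"
    have qnn: "0 \<le> y \<bullet> (Xk1 *v y)" for y using psdX by (simp add: psd_def)
    define Qt where "Qt = Q - L ** matrix_inv R ** transpose L"
    have Rinv: "invertible R" using pd_ker[OF A1_R] invertible_from_ker by blast
    have RiR: "matrix_inv R ** R = mat 1" by (rule matrix_inv_props(2)[OF Rinv])
    have kill: "K *v y = 0 \<and> Qt *v y = 0" if G0: "y \<bullet> (Mk *v y) = 0" for y
    proof -
      define u where "u = - (K *v y)"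
      have "(Pk *v y) \<bullet> (Mb *v (Pk *v y)) = 0" using G0 unfolding Mk_def quad_PMQ .
      hence "Mb *v (Pk *v y) = 0" using psd_zero A1_blk Mb_def by blast
      hence "vcat (Q *v y + L *v u) (transpose L *v y + R *v u) = 0"
        unfolding Pky u_def[symmetric] Mb_def blockmat_mulv .
      hence e1: "Q *v y + L *v u = 0" and e2: "transpose L *v y + R *v u = 0"
        unfolding vcat_eq_0 by auto
      have Lt: "transpose L *v y = - (R *v u)" using e2 by (simp only: eq_neg_iff_add_eq_0)
      have RiRu: "matrix_inv R *v (R *v u) = u"
        by (simp only: matrix_vector_mul_assoc RiR matrix_vector_mul_lid)
      have Ri: "matrix_inv R *v (transpose L *v y) = - u"
        unfolding Lt mulv_uminus RiRu ..
      have "Qt *v y = Q *v y - L *v (matrix_inv R *v (transpose L *v y))"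
        by (simp only: Qt_def matrix_vector_mult_diff_rdistrib matrix_vector_mul_assoc matrix_mul_assoc)
      also have "\<dots> = Q *v y + L *v u" unfolding Ri mulv_uminus by simp
      finally have Qt0: "Qt *v y = 0" using e1 by simp
      have "transpose L *v y = 0" using A4 Qt0 Qt_def by blast
      hence "R *v u = 0" using e2 by (simp only: add_0_left)
      hence "u = 0" using pd_ker[OF A1_R] by blast
      hence "K *v y = 0" unfolding u_def by (simp only: neg_equal_0_iff_equal)
      thus ?thesis using Qt0 by simp
    qed
    obtain K5 where K5: "stable (A + K5 ** Qt)" using A5_det Qt_def by blast
    show "stable Ahat" unfolding stable_def
    proof (intro allI impI)
      fix l :: complex and v :: "complex^'n"
      assume "v \<noteq> 0 \<and> cmat Ahat *v v = l *s v"
      hence v0: "v \<noteq> 0" and ev: "cmat Ahat *v v = l *s v" by auto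
      show "Re l < 0"
      proof (rule ccontr)
        assume "\<not> Re l < 0"
        hence al: "Re l \<ge> 0" by simp
        define a where "a = re_v v"
        define b where "b = im_v v"
        have Ea: "Ahat *v a = Re l *\<^sub>R a - Im l *\<^sub>R b" using re_im_eig(1)[OF ev] a_def b_def by simp
        have Eb: "Ahat *v b = Im l *\<^sub>R a + Re l *\<^sub>R b" using re_im_eig(2)[OF ev] a_def b_def by simp
        have sab: "a \<bullet> (Xk1 *v b) = b \<bullet> (Xk1 *v a)" by (rule sym_dot[OF Xk1_sym])
        have "a \<bullet> ((transpose Ahat ** Xk1 + Xk1 ** Ahat) *v a) + b \<bullet> ((transpose Ahat ** Xk1 + Xk1 ** Ahat) *v b)
              = 2 * ((Ahat *v a) \<bullet> (Xk1 *v a)) + 2 * ((Ahat *v b) \<bullet> (Xk1 *v b))"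
          using lyap_quad[OF Xk1_sym] by simp
        also have "\<dots> = 2 * Re l * (a \<bullet> (Xk1 *v a) + b \<bullet> (Xk1 *v b))"
          unfolding Ea Eb using sab by (simp add: inner_diff_left inner_add_left algebra_simps)
        finally have "- (a \<bullet> (PiHat *v a) + a \<bullet> (Mk *v a)) - (b \<bullet> (PiHat *v b) + b \<bullet> (Mk *v b))
              = 2 * Re l * (a \<bullet> (Xk1 *v a) + b \<bullet> (Xk1 *v b))" unfolding quad by simp
        moreover have "0 \<le> 2 * Re l * (a \<bullet> (Xk1 *v a) + b \<bullet> (Xk1 *v b))"
          using al qnn[of a] qnn[of b] by simp
        ultimately have "a \<bullet> (Mk *v a) = 0" "b \<bullet> (Mk *v b) = 0"
          using Fnn[of a] Fnn[of b] Gnn[of a] Gnn[of b] by linarith+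
        hence ka: "K *v a = 0 \<and> Qt *v a = 0" and kb: "K *v b = 0 \<and> Qt *v b = 0" using kill by auto
        have Ah: "Ahat *v y = A *v y" if "K *v y = 0" for y
          using that by (simp add: Ahat_def K_def matrix_vector_mult_diff_rdistrib matrix_vector_mul_assoc[symmetric] matrix_mul_assoc[symmetric])
        have N5: "(A + K5 ** Qt) *v y = A *v y" if "Qt *v y = 0" for y
          using that by (simp add: matrix_vector_mult_add_rdistrib matrix_vector_mul_assoc[symmetric])
        have "cmat (A + K5 ** Qt) *v v = cmat Ahat *v v"
          by (rule cmat_eq_if) (simp_all add: a_def[symmetric] b_def[symmetric] Ah N5 ka kb)
        hence "cmat (A + K5 ** Qt) *v v = l *s v" using ev by simp
        hence "Re l < 0" using K5 v0 unfolding stable_def by blast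
        thus False using al by simp
      qed
    qed
  qed
qed

end
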